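(* Let $\mathcal{H}$ be a finite class of classifiers $h:\mathcal{X}\times\{-1,1\}\to\{0,1\}$ containing the two classifiers $\mathbf{1}[a=1]$ and $\mathbf{1}[a=-1]$, and suppose $\gamma>2\nu>0$. Let $\mathrm{OPT}$ be the optimal value of $$\min_{\pi\in\Delta(\mathcal{H})}\mathbb{E}_{h\sim\pi}\Big[\sum_{j=1}^n w_j\mathbf{1}\{h(X_j)\neq Y_j\}\Big]\ \text{ s.t. }\ \forall j\in\{\pm1\}:\ \mathrm{FPR}_j(\pi)-\mathrm{FPR}_{-j}(\pi)\le\gamma,$$ and let $\mathrm{OPT}'$ be the optimal value of the same problem with $\gamma$ replaced by $\gamma-2\nu$. Then $\mathrm{OPT}'-\mathrm{OPT}\le2\nu$.
   Context: $X_j=(\hat x_j,a_j)$ are points, $Y_j\in\{0,1\}$ labels, $w_j\ge0$ weights with $\sum_j w_j=1$. $\mathcal{D}_E$ is a fixed empirical distribution of labeled examples $(\hat x,a,y)$ containing negative examples of both groups, and $\mathrm{FPR}_j(\pi)=\mathbb{E}_{h\sim\pi}[\Pr_{\mathcal{D}_E}(h(x)=1\mid a=j,y\text{ negative})]$ for $\pi\in\Delta(\mathcal{H})$, the set of distributions over $\mathcal{H}$. *)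

theory Defs
  imports Main "HOL-Library.Multiset" Complex_Main
begin

(* A classifier maps a point (x, a) with group attribute a \<in> {-1,1} to a label in {0,1}. *)
type_synonym 'x classifier = "'x \<times> int \<Rightarrow> nat"

definition is_dist :: "'x classifier set \<Rightarrow> ('x classifier \<Rightarrow> real) \<Rightarrow> bool" where
  "is_dist H \<pi> \<longleftrightarrow> (\<forall>h\<in>H. \<pi> h \<ge> 0) \<and> (\<Sum>h\<in>H. \<pi> h) = 1"

(* D_E: empirical distribution = uniform distribution over a finite sample (list) of
   labeled examples (x, a, y). Pr_{D_E}(h(x)=1 | a=j, y=0). *)
definition cond_fpr :: "('x \<times> int \<times> nat) list \<Rightarrow> 'x classifier \<Rightarrow> int \<Rightarrow> real" where
  "cond_fpr D h j =
     real (length (filter (\<lambda>(x,a,y). a = j \<and> y = 0 \<and> h (x,a) = 1) D))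
     / real (length (filter (\<lambda>(x,a,y). a = j \<and> y = 0) D))"

definition FPR :: "'x classifier set \<Rightarrow> ('x \<times> int \<times> nat) list \<Rightarrow> int \<Rightarrow> ('x classifier \<Rightarrow> real) \<Rightarrow> real" where
  "FPR H D j \<pi> = (\<Sum>h\<in>H. \<pi> h * cond_fpr D h j)"

definition objective :: "'x classifier set \<Rightarrow> nat \<Rightarrow> (nat \<Rightarrow> 'x \<times> int) \<Rightarrow> (nat \<Rightarrow> nat) \<Rightarrow> (nat \<Rightarrow> real)
    \<Rightarrow> ('x classifier \<Rightarrow> real) \<Rightarrow> real" where
  "objective H n X Y w \<pi> = (\<Sum>h\<in>H. \<pi> h * (\<Sum>j<n. w j * (if h (X j) \<noteq> Y j then 1 else 0)))"

definition feasible :: "'x classifier set \<Rightarrow> ('x \<times> int \<times> nat) list \<Rightarrow> real \<Rightarrow> ('x classifier \<Rightarrow> real) \<Rightarrow> bool" where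
  "feasible H D \<gamma> \<pi> \<longleftrightarrow> is_dist H \<pi> \<and> (\<forall>j\<in>{-1, 1::int}. FPR H D j \<pi> - FPR H D (-j) \<pi> \<le> \<gamma>)"

definition OPT :: "'x classifier set \<Rightarrow> nat \<Rightarrow> (nat \<Rightarrow> 'x \<times> int) \<Rightarrow> (nat \<Rightarrow> nat) \<Rightarrow> (nat \<Rightarrow> real)
    \<Rightarrow> ('x \<times> int \<times> nat) list \<Rightarrow> real \<Rightarrow> real" where
  "OPT H n X Y w D \<gamma> = Inf {objective H n X Y w \<pi> | \<pi>. feasible H D \<gamma> \<pi>}"

end

theory Submission
  imports Defs
begin

definition mixd :: "real \<Rightarrow> ('x classifier \<Rightarrow> real) \<Rightarrow> 'x classifier \<Rightarrow> 'x classifier \<Rightarrow> real" where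
  "mixd \<alpha> \<pi> h0 = (\<lambda>h. (1-\<alpha>) * \<pi> h + \<alpha> * (if h = h0 then 1 else 0))"

lemma FPR_mix:
  assumes "finite H" "h0 \<in> H"
  shows "FPR H D j (mixd \<alpha> \<pi> h0) = (1-\<alpha>) * FPR H D j \<pi> + \<alpha> * cond_fpr D h0 j"
proof -
  have "FPR H D j (mixd \<alpha> \<pi> h0) = (\<Sum>h\<in>H. (1-\<alpha>) * (\<pi> h * cond_fpr D h j) + (if h = h0 then \<alpha> * cond_fpr D h0 j else 0))"
    unfolding FPR_def mixd_def by (intro sum.cong) (auto simp: algebra_simps)
  also have "\<dots> = (1-\<alpha>) * FPR H D j \<pi> + \<alpha> * cond_fpr D h0 j"
    using assms by (simp add: sum.distrib sum_distrib_left FPR_def)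
  finally show ?thesis .
qed

lemma obj_mix:
  assumes "finite H" "h0 \<in> H"
  shows "objective H n X Y w (mixd \<alpha> \<pi> h0) = (1-\<alpha>) * objective H n X Y w \<pi> + \<alpha> * (\<Sum>j<n. w j * (if h0 (X j) \<noteq> Y j then 1 else 0))"
proof -
  let ?c = "\<lambda>h. (\<Sum>j<n. w j * (if h (X j) \<noteq> Y j then 1 else 0))"
  have "objective H n X Y w (mixd \<alpha> \<pi> h0) = (\<Sum>h\<in>H. (1-\<alpha>) * (\<pi> h * ?c h) + (if h = h0 then \<alpha> * ?c h0 else 0))"
    unfolding objective_def mixd_def by (intro sum.cong) (auto simp: algebra_simps)
  also have "\<dots> = (1-\<alpha>) * objective H n X Y w \<pi> + \<alpha> * ?c h0"
    using assms by (simp add: sum.distrib sum_distrib_left objective_def)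
  finally show ?thesis .
qed

lemma dist_mix:
  assumes "finite H" "h0 \<in> H" "is_dist H \<pi>" "0 \<le> \<alpha>" "\<alpha> \<le> 1"
  shows "is_dist H (mixd \<alpha> \<pi> h0)"
proof -
  have "(\<Sum>h\<in>H. mixd \<alpha> \<pi> h0 h) = (\<Sum>h\<in>H. (1-\<alpha>) * \<pi> h + (if h = h0 then \<alpha> else 0))"
    unfolding mixd_def by (intro sum.cong) auto
  also have "\<dots> = 1" using assms by (simp add: sum.distrib sum_distrib_left[symmetric] is_dist_def)
  finally show ?thesis using assms unfolding is_dist_def mixd_def by auto
qed

lemma obj_nonneg:
  assumes "is_dist H \<pi>" "\<forall>j<n. w j \<ge> 0"
  shows "objective H n X Y w \<pi> \<ge> 0"
  using assms unfolding objective_def is_dist_def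
  by (intro sum_nonneg mult_nonneg_nonneg sum_nonneg) auto

lemma cost_le1:
  assumes "\<forall>j<n. w j \<ge> 0" "(\<Sum>j<n. w j) = 1"
  shows "(\<Sum>j<n. w j * (if h (X j) \<noteq> Y j then 1 else 0)) \<le> (1::real)"
proof -
  have "(\<Sum>j<n. w j * (if h (X j) \<noteq> Y j then 1 else 0)) \<le> (\<Sum>j<n. w j)"
    using assms by (intro sum_mono) auto
  then show ?thesis using assms by simp
qed

lemma feasible_iff:
  "feasible H D \<gamma> \<pi> \<longleftrightarrow> is_dist H \<pi> \<and> FPR H D 1 \<pi> - FPR H D (-1) \<pi> \<le> \<gamma> \<and> FPR H D (-1) \<pi> - FPR H D 1 \<pi> \<le> \<gamma>"
  unfolding feasible_def by auto

lemma alg_mix: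
  fixes a b g :: real
  assumes "a - b + 1 > 0"
  shows "((1 - (a-b-g)/(a-b+1))*a + (a-b-g)/(a-b+1)*0) - ((1 - (a-b-g)/(a-b+1))*b + (a-b-g)/(a-b+1)*1) = g"
proof -
  have e: "((1 - t)*a + t*0) - ((1 - t)*b + t*1) = (a - b) - t * (a - b + 1)" for t :: real
    by (simp add: algebra_simps)
  have "(a - b) - (a-b-g)/(a-b+1) * (a - b + 1) = g" using assms by simp
  then show ?thesis by (simp only: e)
qed

theorem lemma11:
  fixes H :: "'x classifier set" and n :: nat and X :: "nat \<Rightarrow> 'x \<times> int"
    and Y :: "nat \<Rightarrow> nat" and w :: "nat \<Rightarrow> real" and D :: "('x \<times> int \<times> nat) list"
    and \<gamma> \<nu> :: real
  assumes "finite H"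
    and "\<forall>h\<in>H. \<forall>p. h p \<in> {0, 1}"
    and "(\<lambda>(x, a). if a = 1 then 1 else 0) \<in> H"
    and "(\<lambda>(x, a). if a = -1 then 1 else 0) \<in> H"
    and "\<forall>j<n. snd (X j) \<in> {-1, 1}"
    and "\<forall>j<n. Y j \<in> {0, 1}"
    and "\<forall>j<n. w j \<ge> 0"
    and "(\<Sum>j<n. w j) = 1"
    and "\<forall>(x, a, y)\<in>set D. a \<in> {-1, 1} \<and> y \<in> {0, 1}"
    and "\<exists>x. (x, 1, 0) \<in> set D"
    and "\<exists>x. (x, -1, 0) \<in> set D"
    and "\<nu> > 0" and "\<gamma> > 2 * \<nu>"
  shows "OPT H n X Y w D (\<gamma> - 2 * \<nu>) - OPT H n X Y w D \<gamma> \<le> 2 * \<nu>"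
proof -
  define h1 :: "'x classifier" where "h1 = (\<lambda>(x, a). if a = 1 then 1 else 0)"
  define hm :: "'x classifier" where "hm = (\<lambda>(x, a). if a = -1 then 1 else 0)"
  have h1H: "h1 \<in> H" and hmH: "hm \<in> H" using assms(3,4) by (auto simp: h1_def hm_def)
  have fin: "finite H" by fact
  obtain x1 where x1: "(x1, 1, 0) \<in> set D" using assms(10) by blast
  obtain x2 where x2: "(x2, -1, 0) \<in> set D" using assms(11) by blast
  have pos1: "length (filter (\<lambda>(x,a,y). a = 1 \<and> y = 0) D) > 0"
    using x1 by (auto simp: length_pos_if_in_set filter_empty_conv)
  have pos2: "length (filter (\<lambda>(x,a,y). a = -1 \<and> y = 0) D) > 0"
    using x2 by (auto simp: length_pos_if_in_set filter_empty_conv)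
  have c11: "cond_fpr D h1 1 = 1"
  proof -
    have "filter (\<lambda>(x,a,y). a = 1 \<and> y = 0 \<and> h1 (x,a) = 1) D = filter (\<lambda>(x,a,y). a = 1 \<and> y = 0) D"
      by (intro filter_cong) (auto simp: h1_def)
    then show ?thesis using pos1 unfolding cond_fpr_def by simp
  qed
  have c1m: "cond_fpr D h1 (-1) = 0"
  proof -
    have "filter (\<lambda>(x,a,y). a = -1 \<and> y = 0 \<and> h1 (x,a) = 1) D = []"
      by (auto simp: h1_def filter_empty_conv)
    then show ?thesis unfolding cond_fpr_def by simp
  qed
  have cm1: "cond_fpr D hm 1 = 0"
  proof -
    have "filter (\<lambda>(x,a,y). a = 1 \<and> y = 0 \<and> hm (x,a) = 1) D = []"
      by (auto simp: hm_def filter_empty_conv)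
    then show ?thesis unfolding cond_fpr_def by simp
  qed
  have cmm: "cond_fpr D hm (-1) = 1"
  proof -
    have "filter (\<lambda>(x,a,y). a = -1 \<and> y = 0 \<and> hm (x,a) = 1) D = filter (\<lambda>(x,a,y). a = -1 \<and> y = 0) D"
      by (intro filter_cong) (auto simp: hm_def)
    then show ?thesis using pos2 unfolding cond_fpr_def by simp
  qed
  define S where "S = (\<lambda>g. {objective H n X Y w \<pi> | \<pi>. feasible H D g \<pi>})"
  have key: "\<exists>\<pi>'. feasible H D (\<gamma> - 2*\<nu>) \<pi>' \<and> objective H n X Y w \<pi>' \<le> objective H n X Y w \<pi> + 2*\<nu>"
    if f: "feasible H D \<gamma> \<pi>" for \<pi>
  proof -
    let ?d = "FPR H D 1 \<pi> - FPR H D (-1) \<pi>"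
    have dist: "is_dist H \<pi>" and d1: "?d \<le> \<gamma>" and d2: "- ?d \<le> \<gamma>" using f by (auto simp: feasible_iff)
    have on: "objective H n X Y w \<pi> \<ge> 0" using obj_nonneg[OF dist assms(7)] .
    show ?thesis
    proof (cases "\<bar>?d\<bar> \<le> \<gamma> - 2*\<nu>")
      case True
      then have "feasible H D (\<gamma> - 2*\<nu>) \<pi>" using dist by (auto simp: feasible_iff)
      then show ?thesis using assms(12) by force
    next
      case False
      show ?thesis
      proof (cases "?d > 0")
        case True
        with False have dg: "?d > \<gamma> - 2*\<nu>" by auto
        define \<alpha> where "\<alpha> = (?d - (\<gamma> - 2*\<nu>)) / (?d + 1)"
        have a0: "0 \<le> \<alpha>" and a1: "\<alpha> \<le> 1"
          using dg True d1 assms(12,13) by (auto simp: \<alpha>_def divide_simps)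
        have "2*\<nu> \<le> 2*\<nu>*(?d+1)" using True assms(12) by (simp add: algebra_simps)
        then have a2: "\<alpha> \<le> 2*\<nu>"
          unfolding \<alpha>_def using dg True d1 assms(12,13) by (subst pos_divide_le_eq) linarith+
        have nd: "FPR H D 1 (mixd \<alpha> \<pi> hm) - FPR H D (-1) (mixd \<alpha> \<pi> hm) = \<gamma> - 2*\<nu>"
          unfolding FPR_mix[OF fin hmH] cm1 cmm \<alpha>_def using True by (intro alg_mix) linarith
        have fe: "feasible H D (\<gamma> - 2*\<nu>) (mixd \<alpha> \<pi> hm)"
          using nd dist_mix[OF fin hmH dist a0 a1] assms(12,13) by (simp add: feasible_iff)
        have "objective H n X Y w (mixd \<alpha> \<pi> hm) \<le> objective H n X Y w \<pi> + \<alpha> * 1"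
        proof -
          have "\<alpha> * (\<Sum>j<n. w j * (if hm (X j) \<noteq> Y j then 1 else 0)) \<le> \<alpha> * 1"
            using cost_le1[OF assms(7,8), of hm X Y] a0 by (rule mult_left_mono)
          moreover have "\<alpha> * objective H n X Y w \<pi> \<ge> 0" using a0 on by simp
          ultimately show ?thesis unfolding obj_mix[OF fin hmH] by (simp add: algebra_simps)
        qed
        then show ?thesis using fe a2 by force
      next
        case nT: False
        with False have dg: "- ?d > \<gamma> - 2*\<nu>" by auto
        define \<alpha> where "\<alpha> = (FPR H D (-1) \<pi> - FPR H D 1 \<pi> - (\<gamma> - 2*\<nu>)) / (FPR H D (-1) \<pi> - FPR H D 1 \<pi> + 1)"
        have a0: "0 \<le> \<alpha>" and a1: "\<alpha> \<le> 1"
          using dg nT d2 assms(12,13) by (auto simp: \<alpha>_def divide_simps)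
        have "2*\<nu> \<le> 2*\<nu>*(FPR H D (-1) \<pi> - FPR H D 1 \<pi> + 1)" using nT assms(12) by (simp add: algebra_simps)
        then have a2: "\<alpha> \<le> 2*\<nu>"
          unfolding \<alpha>_def using dg nT d2 assms(12,13) by (subst pos_divide_le_eq) linarith+
        have nd: "FPR H D (-1) (mixd \<alpha> \<pi> h1) - FPR H D 1 (mixd \<alpha> \<pi> h1) = \<gamma> - 2*\<nu>"
          unfolding FPR_mix[OF fin h1H] c1m c11 \<alpha>_def using nT by (intro alg_mix) linarith
        have fe: "feasible H D (\<gamma> - 2*\<nu>) (mixd \<alpha> \<pi> h1)"
          using nd dist_mix[OF fin h1H dist a0 a1] assms(12,13) by (simp add: feasible_iff)
        have "objective H n X Y w (mixd \<alpha> \<pi> h1) \<le> objective H n X Y w \<pi> + \<alpha> * 1"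
        proof -
          have "\<alpha> * (\<Sum>j<n. w j * (if h1 (X j) \<noteq> Y j then 1 else 0)) \<le> \<alpha> * 1"
            using cost_le1[OF assms(7,8), of h1 X Y] a0 by (rule mult_left_mono)
          moreover have "\<alpha> * objective H n X Y w \<pi> \<ge> 0" using a0 on by simp
          ultimately show ?thesis unfolding obj_mix[OF fin h1H] by (simp add: algebra_simps)
        qed
        then show ?thesis using fe a2 by force
      qed
    qed
  qed
  define \<delta> where "\<delta> = (\<lambda>h::'x classifier. if h = h1 then (1::real) else 0)"
  have dd: "is_dist H \<delta>" using fin h1H by (simp add: is_dist_def \<delta>_def)
  have "FPR H D j \<delta> = cond_fpr D h1 j" for j
    proof -
    have "FPR H D j \<delta> = (\<Sum>h\<in>H. if h = h1 then cond_fpr D h1 j else 0)"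
      unfolding FPR_def \<delta>_def by (intro sum.cong) auto
    then show ?thesis using fin h1H by simp
  qed
  then have f0: "feasible H D \<gamma> (mixd (1/2) \<delta> hm)"
    using dist_mix[OF fin hmH dd] assms(12,13)
    by (simp add: feasible_iff FPR_mix[OF fin hmH] c11 c1m cm1 cmm)
  have ne: "S \<gamma> \<noteq> {}" using f0 by (auto simp: S_def)
  have bdd: "bdd_below (S (\<gamma> - 2*\<nu>))"
    unfolding S_def bdd_below_def
    by (rule exI[of _ 0]) (auto simp: feasible_def intro: obj_nonneg[OF _ assms(7)])
  have "Inf (S (\<gamma> - 2*\<nu>)) - 2*\<nu> \<le> Inf (S \<gamma>)"
  proof (rule cInf_greatest[OF ne])
    fix v assume "v \<in> S \<gamma>"
    then obtain \<pi> where v: "v = objective H n X Y w \<pi>" and f: "feasible H D \<gamma> \<pi>" by (auto simp: S_def)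
    obtain \<pi>' where f': "feasible H D (\<gamma> - 2*\<nu>) \<pi>'" and le: "objective H n X Y w \<pi>' \<le> v + 2*\<nu>"
      using key[OF f] v by blast
    have "Inf (S (\<gamma> - 2*\<nu>)) \<le> objective H n X Y w \<pi>'"
      using f' by (intro cInf_lower[OF _ bdd]) (auto simp: S_def)
    then show "Inf (S (\<gamma> - 2*\<nu>)) - 2*\<nu> \<le> v" using le by simp
  qed
  then show ?thesis unfolding OPT_def S_def by simp
qed

end
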